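(* Let $\rho_{AB}$ be a two-qubit Bell diagonal state, i.e. $\rho_{AB}=p_0|\phi^+\rangle\langle\phi^+|+p_1|\psi^+\rangle\langle\psi^+|+p_2|\psi^-\rangle\langle\psi^-|+p_3|\phi^-\rangle\langle\phi^-|$ with $(p_0,\dots,p_3)$ a probability vector, where $|\phi^\pm\rangle=(|00\rangle\pm|11\rangle)/\sqrt2$, $|\psi^\pm\rangle=(|01\rangle\pm|10\rangle)/\sqrt2$. Let $R_{\mu\nu}=\operatorname{Tr}[(\sigma_\mu\otimes\sigma_\nu)\rho_{AB}]$ and let $\lambda_1\le\lambda_2\le\lambda_3$ be $|R_{11}|,|R_{22}|,|R_{33}|$ in nondecreasing order. Then the two-sided (total) negativity of quantumness of $\rho_{AB}$ is $Q^{AB}_{\mathcal N}(\rho_{AB})=\lambda_2/2$.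
   Context: $\sigma_0=\mathbb I,\sigma_1=\sigma_x,\sigma_2=\sigma_y,\sigma_3=\sigma_z$. The negativity of a bipartite state $\tau_{X:Y}$ is $\mathcal N_{X:Y}(\tau)=(\|\tau^\Gamma\|_1-1)/2$, with $\tau^\Gamma$ the partial transpose on one party and $\|\cdot\|_1$ the trace norm. For a system $S$ of dimension $m$ with orthonormal basis $\{|s_k\rangle\}$, the measurement interaction is the isometry $V_S:S\to S\otimes S'$, $S'$ an $m$-dimensional system with computational basis $\{|k\rangle\}$, with $V_S|s_k\rangle=|s_k\rangle|k\rangle$. The two-sided negativity of quantumness is $Q^{AB}_{\mathcal N}(\rho_{AB})=\min \mathcal N_{AB:A'B'}\big((V_A\otimes V_B)\rho_{AB}(V_A\otimes V_B)^\dagger\big)$, minimized over all choices of orthonormal bases of $A$ and of $B$. *)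

theory Defs
  imports "Jordan_Normal_Form.Schur_Decomposition" "Jordan_Normal_Form.Char_Poly"
begin

(* Kronecker (tensor) product; index convention i = i_A * dim_B + i_B *)
definition kron :: "complex mat \<Rightarrow> complex mat \<Rightarrow> complex mat" where
  "kron A B = mat (dim_row A * dim_row B) (dim_col A * dim_col B)
     (\<lambda>(i,j). A $$ (i div dim_row B, j div dim_col B) * B $$ (i mod dim_row B, j mod dim_col B))"

definition ketbra :: "complex vec \<Rightarrow> complex vec \<Rightarrow> complex mat" where
  "ketbra v w = mat (dim_vec v) (dim_vec w) (\<lambda>(i,j). v $ i * cnj (w $ j))"

definition trace_norm :: "complex mat \<Rightarrow> real" where
  "trace_norm X = sum_mset (image_mset (\<lambda>x. sqrt (Re x)) (proots (char_poly (mat_adjoint X * X))))"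

(* computational basis of C^2: index 0 = |0>, 1 = |1>; two qubits: index 2a+b = |ab> *)
definition bell_phi_plus :: "complex vec" where
  "bell_phi_plus = vec_of_list [1/sqrt 2, 0, 0, 1/sqrt 2]"
definition bell_phi_minus :: "complex vec" where
  "bell_phi_minus = vec_of_list [1/sqrt 2, 0, 0, - 1/sqrt 2]"
definition bell_psi_plus :: "complex vec" where
  "bell_psi_plus = vec_of_list [0, 1/sqrt 2, 1/sqrt 2, 0]"
definition bell_psi_minus :: "complex vec" where
  "bell_psi_minus = vec_of_list [0, 1/sqrt 2, - 1/sqrt 2, 0]"

definition bell_diag :: "(nat \<Rightarrow> real) \<Rightarrow> complex mat" where
  "bell_diag p =
      complex_of_real (p 0) \<cdot>\<^sub>m ketbra bell_phi_plus bell_phi_plus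
    + complex_of_real (p 1) \<cdot>\<^sub>m ketbra bell_psi_plus bell_psi_plus
    + complex_of_real (p 2) \<cdot>\<^sub>m ketbra bell_psi_minus bell_psi_minus
    + complex_of_real (p 3) \<cdot>\<^sub>m ketbra bell_phi_minus bell_phi_minus"

definition pauli :: "nat \<Rightarrow> complex mat" where
  "pauli k = (if k = 0 then mat_of_rows_list 2 [[1,0],[0,1]]
         else if k = 1 then mat_of_rows_list 2 [[0,1],[1,0]]
         else if k = 2 then mat_of_rows_list 2 [[0,-\<i>],[\<i>,0]]
         else mat_of_rows_list 2 [[1,0],[0,-1]])"

definition mtrace :: "complex mat \<Rightarrow> complex" where
  "mtrace A = (\<Sum>i<dim_row A. A $$ (i,i))"

definition corr :: "complex mat \<Rightarrow> nat \<Rightarrow> nat \<Rightarrow> complex" where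
  "corr \<rho> \<mu> \<nu> = mtrace (kron (pauli \<mu>) (pauli \<nu>) * \<rho>)"

definition onb :: "nat \<Rightarrow> (nat \<Rightarrow> complex vec) \<Rightarrow> bool" where
  "onb m s \<longleftrightarrow> (\<forall>k<m. s k \<in> carrier_vec m) \<and>
     (\<forall>j<m. \<forall>k<m. s j \<bullet>c s k = (if j = k then 1 else 0))"

(* measurement isometry V_S : S \<rightarrow> S \<otimes> S', V_S |s_k> = |s_k>|k>,
   i.e. V_S = sum_k (|s_k> \<otimes> |k>) <s_k|; index of S \<otimes> S' is i_S * m + k *)
definition meas_iso :: "nat \<Rightarrow> (nat \<Rightarrow> complex vec) \<Rightarrow> complex mat" where
  "meas_iso m s = mat (m * m) m
     (\<lambda>(i,j). \<Sum>k<m. (s k $ (i div m)) * (if i mod m = k then 1 else 0) * cnj (s k $ j))"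

(* state on A A' B B' (in this tensor order, each factor a qubit) *)
definition measured_state :: "(nat \<Rightarrow> complex vec) \<Rightarrow> (nat \<Rightarrow> complex vec) \<Rightarrow> complex mat \<Rightarrow> complex mat" where
  "measured_state sA sB \<rho> =
     (let W = kron (meas_iso 2 sA) (meas_iso 2 sB) in W * \<rho> * mat_adjoint W)"

(* partial transpose on the party A'B' of a 16x16 matrix on A A' B B',
   index i = 8 a + 4 a' + 2 b + b' *)
definition pt_ApBp :: "complex mat \<Rightarrow> complex mat" where
  "pt_ApBp \<tau> = mat 16 16 (\<lambda>(i,j).
     let a = i div 8; a' = (i div 4) mod 2; b = (i div 2) mod 2; b' = i mod 2;
         c = j div 8; c' = (j div 4) mod 2; d = (j div 2) mod 2; d' = j mod 2
     in \<tau> $$ (8*a + 4*c' + 2*b + d', 8*c + 4*a' + 2*d + b'))"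

definition negativity_AB_ApBp :: "complex mat \<Rightarrow> real" where
  "negativity_AB_ApBp \<tau> = (trace_norm (pt_ApBp \<tau>) - 1) / 2"

definition QN_AB :: "complex mat \<Rightarrow> real" where
  "QN_AB \<rho> = Inf {negativity_AB_ApBp (measured_state sA sB \<rho>) | sA sB. onb 2 sA \<and> onb 2 sB}"

end

theory Submission
  imports Defs
begin

definition rr :: "(nat \<Rightarrow> real) \<Rightarrow> nat \<Rightarrow> nat \<Rightarrow> real" where
  "rr p i j = (if i = j then (if i = 0 \<or> i = 3 then (p 0 + p 3)/2 else (p 1 + p 2)/2)
     else if (i = 0 \<and> j = 3) \<or> (i = 3 \<and> j = 0) then (p 0 - p 3)/2
     else if (i = 1 \<and> j = 2) \<or> (i = 2 \<and> j = 1) then (p 1 - p 2)/2 else 0)"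

lemma less4: "(i::nat) < 4 \<longleftrightarrow> i = 0 \<or> i = 1 \<or> i = 2 \<or> i = 3" by auto
lemma less2: "(i::nat) < 2 \<longleftrightarrow> i = 0 \<or> i = 1" by auto

definition s2 :: real where "s2 = 1 / sqrt 2"
lemma s2sq: "s2 * s2 = 1/2" unfolding s2_def by (simp add: divide_simps)

lemma bell_entries:
  "bell_phi_plus $ 0 = s2" "bell_phi_plus $ 1 = 0" "bell_phi_plus $ 2 = 0" "bell_phi_plus $ 3 = s2"
  "bell_phi_minus $ 0 = s2" "bell_phi_minus $ 1 = 0" "bell_phi_minus $ 2 = 0" "bell_phi_minus $ 3 = - s2"
  "bell_psi_plus $ 0 = 0" "bell_psi_plus $ 1 = s2" "bell_psi_plus $ 2 = s2" "bell_psi_plus $ 3 = 0"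
  "bell_psi_minus $ 0 = 0" "bell_psi_minus $ 1 = s2" "bell_psi_minus $ 2 = - s2" "bell_psi_minus $ 3 = 0"
  by (simp_all add: bell_phi_plus_def bell_phi_minus_def bell_psi_plus_def bell_psi_minus_def
      vec_of_list_index numeral_eq_Suc s2_def del: vec_of_list_Cons vec_of_list_map)

lemma bell_dims: "dim_vec bell_phi_plus = 4" "dim_vec bell_phi_minus = 4" "dim_vec bell_psi_plus = 4" "dim_vec bell_psi_minus = 4"
  by (simp_all add: bell_phi_plus_def bell_phi_minus_def bell_psi_plus_def bell_psi_minus_def)

lemma ketbra_idx: "i < dim_vec v \<Longrightarrow> j < dim_vec w \<Longrightarrow> ketbra v w $$ (i,j) = v $ i * cnj (w $ j)"
  unfolding ketbra_def by simp

lemma bell_diag_carrier: "bell_diag p \<in> carrier_mat 4 4"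
  unfolding bell_diag_def ketbra_def by (auto simp: bell_dims)

lemma bell_diag_idx: "i < 4 \<Longrightarrow> j < 4 \<Longrightarrow> bell_diag p $$ (i,j) = 
   complex_of_real (p 0) * (bell_phi_plus $ i * cnj (bell_phi_plus $ j))
 + complex_of_real (p 1) * (bell_psi_plus $ i * cnj (bell_psi_plus $ j))
 + complex_of_real (p 2) * (bell_psi_minus $ i * cnj (bell_psi_minus $ j))
 + complex_of_real (p 3) * (bell_phi_minus $ i * cnj (bell_phi_minus $ j))"
  unfolding bell_diag_def by (simp add: ketbra_idx bell_dims ketbra_def)

lemma bell_diag_eq: "i < 4 \<Longrightarrow> j < 4 \<Longrightarrow> bell_diag p $$ (i,j) = complex_of_real (rr p i j)"
proof -
  assume i: "i < 4" and j: "j < 4"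
  have e: "complex_of_real s2 * complex_of_real s2 = 1/2" 
    by (metis of_real_divide of_real_mult of_real_1 of_real_numeral s2sq)
  show ?thesis using i j unfolding less4 bell_diag_idx[OF i j]
    by (elim disjE) (simp_all add: bell_entries bell_entries[unfolded One_nat_def] rr_def e field_simps)
qed

lemma sum4: "(\<Sum>i<(4::nat). f i) = f 0 + f 1 + f 2 + (f 3 :: 'a::comm_monoid_add)"
  by (simp add: numeral_eq_Suc add.assoc)
lemma sum2: "(\<Sum>i<(2::nat). f i) = f 0 + (f 1 :: 'a::comm_monoid_add)"
  by (simp add: numeral_eq_Suc)

lemma kron_idx: "i < dim_row A * dim_row B \<Longrightarrow> j < dim_col A * dim_col B \<Longrightarrow>
   kron A B $$ (i,j) = A $$ (i div dim_row B, j div dim_col B) * B $$ (i mod dim_row B, j mod dim_col B)"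
  unfolding kron_def by simp
lemma kron_dim[simp]: "dim_row (kron A B) = dim_row A * dim_row B" "dim_col (kron A B) = dim_col A * dim_col B"
  unfolding kron_def by simp_all

lemma pauli_dim[simp]: "dim_row (pauli k) = 2" "dim_col (pauli k) = 2"
  unfolding pauli_def mat_of_rows_list_def by auto

lemma corr_mult_idx: "corr \<rho> m n = (\<Sum>i<4. \<Sum>k<4. pauli m $$ (i div 2, k div 2) * pauli n $$ (i mod 2, k mod 2) * \<rho> $$ (k, i))"
  if "\<rho> \<in> carrier_mat 4 4"
proof -
  have "corr \<rho> m n = (\<Sum>i<4. (kron (pauli m) (pauli n) * \<rho>) $$ (i,i))"
    unfolding corr_def mtrace_def by simp
  also have "\<dots> = (\<Sum>i<4. \<Sum>k<4. kron (pauli m) (pauli n) $$ (i,k) * \<rho> $$ (k, i))"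
    using that by (intro sum.cong refl) (auto simp: scalar_prod_def atLeast0LessThan)
  also have "\<dots> = (\<Sum>i<4. \<Sum>k<4. pauli m $$ (i div 2, k div 2) * pauli n $$ (i mod 2, k mod 2) * \<rho> $$ (k, i))"
    by (intro sum.cong refl) (simp add: kron_idx)
  finally show ?thesis .
qed

lemma pauli_idx: "pauli 1 $$ (0,0) = 0" "pauli 1 $$ (0,1) = 1" "pauli 1 $$ (1,0) = 1" "pauli 1 $$ (1,1) = 0"
  "pauli 2 $$ (0,0) = 0" "pauli 2 $$ (0,1) = -\<i>" "pauli 2 $$ (1,0) = \<i>" "pauli 2 $$ (1,1) = 0"
  "pauli 3 $$ (0,0) = 1" "pauli 3 $$ (0,1) = 0" "pauli 3 $$ (1,0) = 0" "pauli 3 $$ (1,1) = -1"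
  by (simp_all add: pauli_def mat_of_rows_list_def)

lemma corr_vals:
  "corr (bell_diag p) 1 1 = complex_of_real (p 0 + p 1 - p 2 - p 3)"
  "corr (bell_diag p) 2 2 = complex_of_real (- p 0 + p 1 - p 2 + p 3)"
  "corr (bell_diag p) 3 3 = complex_of_real (p 0 - p 1 - p 2 + p 3)"
  by (simp_all add: corr_mult_idx[OF bell_diag_carrier] sum4 bell_diag_eq rr_def pauli_idx pauli_idx[unfolded One_nat_def] field_simps)

definition cmb :: "nat \<Rightarrow> nat \<Rightarrow> nat" where
  "cmb x y = 8*(x div 2) + 4*(y div 2) + 2*(x mod 2) + y mod 2"
definition px :: "nat \<Rightarrow> nat" where "px i = 2*(i div 8) + (i div 2) mod 2"
definition py :: "nat \<Rightarrow> nat" where "py i = 2*((i div 4) mod 2) + i mod 2"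

lemma less16: "(i::nat) < 16 \<longleftrightarrow> i \<in> {0,1,2,3,4,5,6,7,8,9,10,11,12,13,14,15}" by (auto simp: numeral_eq_Suc less_Suc_eq)

lemma cmb_props: assumes "x < 4" "y < 4"
  shows "cmb x y < 16" "px (cmb x y) = x" "py (cmb x y) = y"
    "cmb x y div 8 = x div 2" "(cmb x y div 4) mod 2 = y div 2" "(cmb x y div 2) mod 2 = x mod 2" "cmb x y mod 2 = y mod 2"
    "cmb x y div 4 = 2 * (x div 2) + y div 2" "cmb x y mod 4 = 2 * (x mod 2) + y mod 2"
  using assms unfolding less4 by (auto simp: cmb_def px_def py_def)

lemma px_py: assumes "i < 16" shows "px i < 4" "py i < 4" "cmb (px i) (py i) = i"
  using assms unfolding less16 by (auto simp: cmb_def px_def py_def)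

lemma sum16: "(\<Sum>i<16. f i) = (\<Sum>x<4. \<Sum>y<4. f (cmb x y))"
proof -
  have "(\<Sum>i<16. f i) = (\<Sum>(x,y)\<in>{..<4}\<times>{..<4}. f (cmb x y))"
    by (rule sum.reindex_bij_witness[where i="\<lambda>(x,y). cmb x y" and j="\<lambda>i. (px i, py i)"])
       (auto simp: px_py cmb_props)
  also have "\<dots> = (\<Sum>x<4. \<Sum>y<4. f (cmb x y))" by (simp add: sum.cartesian_product)
  finally show ?thesis .
qed

lemma sum4d: "(\<Sum>x<(4::nat). f x) = (\<Sum>a<2. \<Sum>b<2. f (2*a+b))"
  by (simp add: sum4 sum2 numeral_eq_Suc add.assoc)

definition Sm :: "(nat \<Rightarrow> complex vec) \<Rightarrow> (nat \<Rightarrow> complex vec) \<Rightarrow> nat \<Rightarrow> nat \<Rightarrow> complex" where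
  "Sm sA sB r x = sA (x div 2) $ (r div 2) * sB (x mod 2) $ (r mod 2)"

definition rp :: "(nat \<Rightarrow> complex vec) \<Rightarrow> (nat \<Rightarrow> complex vec) \<Rightarrow> complex mat \<Rightarrow> nat \<Rightarrow> nat \<Rightarrow> complex" where
  "rp sA sB \<rho> x y = (\<Sum>u<4. \<Sum>v<4. cnj (Sm sA sB u x) * \<rho> $$ (u,v) * Sm sA sB v y)"

lemma adj_dim[simp]: "dim_row (mat_adjoint A) = dim_col A" "dim_col (mat_adjoint A) = dim_row A"
  unfolding mat_adjoint_def by auto

lemma adj_idx: "i < dim_col A \<Longrightarrow> j < dim_row A \<Longrightarrow> mat_adjoint A $$ (i,j) = cnj (A $$ (j,i))"
  unfolding mat_adjoint_def by (simp add: mat_of_rows_index)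

lemma meas_dim[simp]: "dim_row (meas_iso m s) = m * m" "dim_col (meas_iso m s) = m"
  unfolding meas_iso_def by auto

lemma meas_idx: "r < 4 \<Longrightarrow> j < 2 \<Longrightarrow> meas_iso 2 s $$ (r,j) = s (r mod 2) $ (r div 2) * cnj (s (r mod 2) $ j)"
  unfolding meas_iso_def by (auto simp: sum2 less2[of "r mod 2", simplified])

lemma W_idx: assumes "x < 4" "z < 4" "u < 4"
  shows "kron (meas_iso 2 sA) (meas_iso 2 sB) $$ (cmb x z, u) = Sm sA sB x z * cnj (Sm sA sB u z)"
proof -
  have "kron (meas_iso 2 sA) (meas_iso 2 sB) $$ (cmb x z, u) =
     meas_iso 2 sA $$ (cmb x z div 4, u div 2) * meas_iso 2 sB $$ (cmb x z mod 4, u mod 2)"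
    using assms cmb_props[OF assms(1,2)] by (simp add: kron_idx)
  also have "\<dots> = Sm sA sB x z * cnj (Sm sA sB u z)"
    using assms unfolding less4 by (auto simp: meas_idx cmb_def Sm_def)
  finally show ?thesis .
qed

lemma mult3_idx: assumes "A \<in> carrier_mat n m" "B \<in> carrier_mat m l" "C \<in> carrier_mat l q" "i < n" "j < q"
  shows "(A * B * C) $$ (i,j) = (\<Sum>k<l. (\<Sum>u<m. A $$ (i,u) * B $$ (u,k)) * C $$ (k,j))"
proof -
  have "(A * B * C) $$ (i,j) = (\<Sum>k<l. (A * B) $$ (i,k) * C $$ (k,j))"
    using assms by (simp add: scalar_prod_def atLeast0LessThan del: assoc_mult_mat)
  also have "\<dots> = (\<Sum>k<l. (\<Sum>u<m. A $$ (i,u) * B $$ (u,k)) * C $$ (k,j))"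
    using assms by (intro sum.cong refl) (simp add: scalar_prod_def atLeast0LessThan)
  finally show ?thesis .
qed

lemma tau_idx: assumes "x < 4" "z < 4" "x2 < 4" "z2 < 4" and rho: "\<rho> \<in> carrier_mat 4 4"
  shows "measured_state sA sB \<rho> $$ (cmb x z, cmb x2 z2) = Sm sA sB x z * rp sA sB \<rho> z z2 * cnj (Sm sA sB x2 z2)"
proof -
  let ?W = "kron (meas_iso 2 sA) (meas_iso 2 sB)"
  have i: "cmb x z < 16" "cmb x2 z2 < 16" using cmb_props assms by auto
  have W: "?W \<in> carrier_mat 16 4" by (intro carrier_matI) simp_all
  have Wh: "mat_adjoint ?W \<in> carrier_mat 4 16" by (intro carrier_matI) simp_all
  have "measured_state sA sB \<rho> $$ (cmb x z, cmb x2 z2) = (?W * \<rho> * mat_adjoint ?W) $$ (cmb x z, cmb x2 z2)"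
    by (simp only: measured_state_def Let_def)
  also have "\<dots> = (\<Sum>k<4. (\<Sum>u<4. ?W $$ (cmb x z, u) * \<rho> $$ (u,k)) * mat_adjoint ?W $$ (k, cmb x2 z2))"
    by (rule mult3_idx[OF W rho Wh i])
  also have "\<dots> = (\<Sum>k<4. (\<Sum>u<4. ?W $$ (cmb x z, u) * \<rho> $$ (u,k)) * cnj (?W $$ (cmb x2 z2, k)))"
    using i by (intro sum.cong refl) (simp add: adj_idx)
  also have "\<dots> = (\<Sum>k<4. (\<Sum>u<4. Sm sA sB x z * cnj (Sm sA sB u z) * \<rho> $$ (u,k)) * cnj (Sm sA sB x2 z2 * cnj (Sm sA sB k z2)))"
    using assms by (intro sum.cong refl) (simp add: W_idx)
  also have "\<dots> = Sm sA sB x z * rp sA sB \<rho> z z2 * cnj (Sm sA sB x2 z2)"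
    unfolding rp_def sum_distrib_left sum_distrib_right
    by (subst sum.swap) (intro sum.cong refl, simp add: ac_simps)
  finally show ?thesis .
qed

lemma pt_idx: "i < 16 \<Longrightarrow> j < 16 \<Longrightarrow> pt_ApBp \<tau> $$ (i,j) = \<tau> $$
   (8*(i div 8) + 4*((j div 4) mod 2) + 2*((i div 2) mod 2) + j mod 2,
    8*(j div 8) + 4*((i div 4) mod 2) + 2*((j div 2) mod 2) + i mod 2)"
  unfolding pt_ApBp_def Let_def by (simp only: index_mat prod.case)

lemma X_idx: assumes "x < 4" "y < 4" "x2 < 4" "y2 < 4" and rho: "\<rho> \<in> carrier_mat 4 4"
  shows "pt_ApBp (measured_state sA sB \<rho>) $$ (cmb x y, cmb x2 y2) = Sm sA sB x y2 * rp sA sB \<rho> y2 y * cnj (Sm sA sB x2 y)"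
proof -
  have "pt_ApBp (measured_state sA sB \<rho>) $$ (cmb x y, cmb x2 y2) = measured_state sA sB \<rho> $$ (cmb x y2, cmb x2 y)"
  proof -
    note c = cmb_props[OF assms(1,2)] cmb_props[OF assms(3,4)]
    have "pt_ApBp (measured_state sA sB \<rho>) $$ (cmb x y, cmb x2 y2) = measured_state sA sB \<rho> $$
     (8*(x div 2) + 4*(y2 div 2) + 2*(x mod 2) + y2 mod 2, 8*(x2 div 2) + 4*(y div 2) + 2*(x2 mod 2) + y mod 2)"
      by (subst pt_idx) (use c in \<open>simp_all only:\<close>)
    thus ?thesis by (simp only: cmb_def)
  qed
  also have "\<dots> = Sm sA sB x y2 * rp sA sB \<rho> y2 y * cnj (Sm sA sB x2 y)"
    using tau_idx assms by simp
  finally show ?thesis .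
qed

lemma onb_carrier: "onb 2 s \<Longrightarrow> k < 2 \<Longrightarrow> s k \<in> carrier_vec 2" unfolding onb_def by auto

lemma col_orth: assumes "onb 2 s" "j < 2" "k < 2"
  shows "(\<Sum>i<2. cnj (s j $ i) * s k $ i) = (if j = k then 1 else 0)"
proof -
  have "s j \<bullet>c s k = (if j = k then 1 else 0)" using assms unfolding onb_def by auto
  moreover have "s j \<bullet>c s k = (\<Sum>i<2. s j $ i * cnj (s k $ i))"
    using onb_carrier[OF assms(1,3)] by (simp add: scalar_prod_def atLeast0LessThan)
  ultimately have "(\<Sum>i<2. s j $ i * cnj (s k $ i)) = (if j = k then 1 else 0)" by simp
  hence "cnj (\<Sum>i<2. s j $ i * cnj (s k $ i)) = (if j = k then 1 else 0)" by simp
  thus ?thesis by (simp add: ac_simps)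
qed

lemma row_orth: assumes "onb 2 s" "r < 2" "r' < 2"
  shows "(\<Sum>a<2. s a $ r * cnj (s a $ r')) = (if r = r' then 1 else 0)"
proof -
  define M where "M = mat 2 2 (\<lambda>(r,a). s a $ r)"
  define Mh where "Mh = mat 2 2 (\<lambda>(a,r). cnj (s a $ r))"
  have M: "M \<in> carrier_mat 2 2" and Mh: "Mh \<in> carrier_mat 2 2" unfolding M_def Mh_def by auto
  have "Mh * M = 1\<^sub>m 2"
  proof (rule eq_matI)
    fix i j assume "i < dim_row (1\<^sub>m 2::complex mat)" "j < dim_col (1\<^sub>m 2::complex mat)"
    hence ij: "i < 2" "j < 2" by auto
    have "(Mh * M) $$ (i,j) = (\<Sum>r<2. cnj (s i $ r) * s j $ r)"
      using ij unfolding M_def Mh_def by (simp add: scalar_prod_def atLeast0LessThan)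
    also have "\<dots> = 1\<^sub>m 2 $$ (i,j)" using col_orth[OF assms(1) ij] ij by simp
    finally show "(Mh * M) $$ (i,j) = 1\<^sub>m 2 $$ (i,j)" .
  qed (insert M Mh, auto)
  hence "M * Mh = 1\<^sub>m 2" by (rule mat_mult_left_right_inverse[OF Mh M])
  hence "(M * Mh) $$ (r,r') = (if r = r' then 1 else 0)" using assms by simp
  moreover have "(M * Mh) $$ (r,r') = (\<Sum>a<2. s a $ r * cnj (s a $ r'))"
    using assms unfolding M_def Mh_def by (simp add: scalar_prod_def atLeast0LessThan)
  ultimately show ?thesis by simp
qed

lemma div2_lt: "(y::nat) < 4 \<Longrightarrow> y div 2 < 2" by auto
lemma mod2_lt: "(y::nat) mod 2 < 2" by auto
lemma eq_divmod: "(y::nat) = y' \<longleftrightarrow> y div 2 = y' div 2 \<and> y mod 2 = y' mod 2"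
  by (metis div_mult_mod_eq)

lemma Sm_col: assumes A: "onb 2 sA" and B: "onb 2 sB" and "y < 4" "y' < 4"
  shows "(\<Sum>x<4. cnj (Sm sA sB x y) * Sm sA sB x y') = (if y = y' then 1 else 0)"
proof -
  have "(\<Sum>x<4. cnj (Sm sA sB x y) * Sm sA sB x y') =
    (\<Sum>a<2. cnj (sA (y div 2) $ a) * sA (y' div 2) $ a) * (\<Sum>b<2. cnj (sB (y mod 2) $ b) * sB (y' mod 2) $ b)"
    by (simp add: sum4 sum2 Sm_def algebra_simps)
  also have "\<dots> = (if y = y' then 1 else 0)"
    using col_orth[OF A div2_lt[OF assms(3)] div2_lt[OF assms(4)]] col_orth[OF B mod2_lt mod2_lt]
    by (auto simp: eq_divmod[of y y'])
  finally show ?thesis .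
qed

lemma Sm_row: assumes A: "onb 2 sA" and B: "onb 2 sB" and "x < 4" "x' < 4"
  shows "(\<Sum>y<4. Sm sA sB x y * cnj (Sm sA sB x' y)) = (if x = x' then 1 else 0)"
proof -
  have "(\<Sum>y<4. Sm sA sB x y * cnj (Sm sA sB x' y)) =
    (\<Sum>a<2. sA a $ (x div 2) * cnj (sA a $ (x' div 2))) * (\<Sum>b<2. sB b $ (x mod 2) * cnj (sB b $ (x' mod 2)))"
    by (simp add: sum4 sum2 Sm_def algebra_simps)
  also have "\<dots> = (if x = x' then 1 else 0)"
    using row_orth[OF A div2_lt[OF assms(3)] div2_lt[OF assms(4)]] row_orth[OF B mod2_lt mod2_lt]
    by (auto simp: eq_divmod[of x x'])
  finally show ?thesis .
qed

definition Lm :: "(nat \<Rightarrow> complex vec) \<Rightarrow> (nat \<Rightarrow> complex vec) \<Rightarrow> complex mat" where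
  "Lm sA sB = mat 16 16 (\<lambda>(i,j). if py i = py j then Sm sA sB (px i) (px j) else 0)"
definition Lh :: "(nat \<Rightarrow> complex vec) \<Rightarrow> (nat \<Rightarrow> complex vec) \<Rightarrow> complex mat" where
  "Lh sA sB = mat 16 16 (\<lambda>(i,j). if py i = py j then cnj (Sm sA sB (px j) (px i)) else 0)"
definition Dm :: "(nat \<Rightarrow> complex vec) \<Rightarrow> (nat \<Rightarrow> complex vec) \<Rightarrow> complex mat \<Rightarrow> complex mat" where
  "Dm sA sB \<rho> = mat 16 16 (\<lambda>(i,j). if i = j then complex_of_real ((cmod (rp sA sB \<rho> (py i) (px i)))^2) else 0)"

lemma cmb_inj: "x < 4 \<Longrightarrow> y < 4 \<Longrightarrow> x' < 4 \<Longrightarrow> y' < 4 \<Longrightarrow> cmb x y = cmb x' y' \<longleftrightarrow> x = x' \<and> y = y'"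
  by (metis cmb_props(2,3))

lemma sum_if_eq: "(y::nat) < 4 \<Longrightarrow> (\<Sum>w<4. if y = w then f w else 0) = f y"
  by (simp add: sum.delta)

lemma sum_if2: "(y::nat) < 4 \<Longrightarrow> (\<Sum>w<4. (if y = w then a w else 0) * (if w = y' then b w else 0)) = (if y = y' then a y * (b y :: complex) else 0)"
proof -
  assume y: "y < 4"
  have "(\<Sum>w<4. (if y = w then a w else 0) * (if w = y' then b w else 0)) = (\<Sum>w<4. if y = w then (if y = y' then a y * b y else 0) else 0)"
    by (intro sum.cong refl) auto
  also have "\<dots> = (if y = y' then a y * b y else 0)" using y by (simp add: sum.delta)
  finally show ?thesis .
qed

lemma L_Lh: assumes A: "onb 2 sA" and B: "onb 2 sB"
  shows "Lm sA sB * Lh sA sB = 1\<^sub>m 16"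
proof (rule eq_matI)
  fix i j assume "i < dim_row (1\<^sub>m 16 :: complex mat)" "j < dim_col (1\<^sub>m 16 :: complex mat)"
  hence ij: "i < 16" "j < 16" by auto
  obtain x2 y2 x3 y3 where i: "i = cmb x2 y2" and j: "j = cmb x3 y3" and b: "x2 < 4" "y2 < 4" "x3 < 4" "y3 < 4"
    using px_py ij by metis
  have "(Lm sA sB * Lh sA sB) $$ (i,j) = (\<Sum>k<16. Lm sA sB $$ (i,k) * Lh sA sB $$ (k,j))"
    using ij by (simp add: Lm_def Lh_def scalar_prod_def atLeast0LessThan)
  also have "\<dots> = (\<Sum>z<4. \<Sum>w<4. (if y2 = w then Sm sA sB x2 z else 0) * (if w = y3 then cnj (Sm sA sB x3 z) else 0))"
    unfolding sum16 i j using b by (intro sum.cong refl) (simp add: Lm_def Lh_def cmb_props)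
  also have "\<dots> = (if y2 = y3 then (\<Sum>z<4. Sm sA sB x2 z * cnj (Sm sA sB x3 z)) else 0)"
    using b by (simp add: sum_if2)
  also have "\<dots> = 1\<^sub>m 16 $$ (i,j)"
    using ij b Sm_row[OF A B, of x2 x3] unfolding i j by (auto simp: cmb_inj)
  finally show "(Lm sA sB * Lh sA sB) $$ (i,j) = 1\<^sub>m 16 $$ (i,j)" .
qed (auto simp: Lm_def Lh_def)

lemma X_dim[simp]: "dim_row (pt_ApBp \<tau>) = 16" "dim_col (pt_ApBp \<tau>) = 16"
  unfolding pt_ApBp_def by simp_all

lemma zcnj: "z * cnj z = (complex_of_real (cmod z))^2" "cnj z * z = (complex_of_real (cmod z))^2"
  using complex_norm_square[of z] by (simp_all add: mult.commute)

lemma XHX_eq: assumes A: "onb 2 sA" and B: "onb 2 sB" and rho: "\<rho> \<in> carrier_mat 4 4"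
  shows "mat_adjoint (pt_ApBp (measured_state sA sB \<rho>)) * pt_ApBp (measured_state sA sB \<rho>)
     = Lm sA sB * Dm sA sB \<rho> * Lh sA sB"
proof (rule eq_matI)
  let ?X = "pt_ApBp (measured_state sA sB \<rho>)"
  let ?S = "Sm sA sB" and ?r = "rp sA sB \<rho>"
  fix i j assume "i < dim_row (Lm sA sB * Dm sA sB \<rho> * Lh sA sB)" "j < dim_col (Lm sA sB * Dm sA sB \<rho> * Lh sA sB)"
  hence ij: "i < 16" "j < 16" by (auto simp: Lm_def Lh_def)
  obtain x2 y2 x3 y3 where i: "i = cmb x2 y2" and j: "j = cmb x3 y3" and b: "x2 < 4" "y2 < 4" "x3 < 4" "y3 < 4"
    using px_py ij by metis
  define G where "G y = cnj (?r y2 y) * ?r y3 y * ?S x2 y * cnj (?S x3 y)" for y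
  have "(mat_adjoint ?X * ?X) $$ (i,j) = (\<Sum>k<16. cnj (?X $$ (k,i)) * ?X $$ (k,j))"
    using ij by (simp add: scalar_prod_def atLeast0LessThan adj_idx)
  also have "\<dots> = (\<Sum>x<4. \<Sum>y<4. cnj (?S x y2 * ?r y2 y * cnj (?S x2 y)) * (?S x y3 * ?r y3 y * cnj (?S x3 y)))"
    unfolding sum16 i j using b rho by (intro sum.cong refl) (simp add: X_idx)
  also have "\<dots> = (\<Sum>y<4. (\<Sum>x<4. cnj (?S x y2) * ?S x y3) * G y)"
    unfolding sum_distrib_right G_def by (subst sum.swap) (intro sum.cong refl, simp add: ac_simps)
  also have "\<dots> = (if y2 = y3 then (\<Sum>z<4. ?S x2 z * complex_of_real ((cmod (?r y2 z))^2) * cnj (?S x3 z)) else 0)"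
    using b apply (simp only: Sm_col[OF A B])
    by (auto simp: G_def zcnj ac_simps intro!: sum.cong)
  also have "\<dots> = (\<Sum>z<4. \<Sum>w<4. (if y2 = w then ?S x2 z * complex_of_real ((cmod (?r w z))^2) else 0) * (if w = y3 then cnj (?S x3 z) else 0))"
    using b by (simp add: sum_if2 sum.neutral)
  also have "\<dots> = (\<Sum>k<16. (Lm sA sB $$ (i,k) * Dm sA sB \<rho> $$ (k,k)) * Lh sA sB $$ (k,j))"
    unfolding sum16 i j using b by (intro sum.cong refl) (simp add: Lm_def Lh_def Dm_def cmb_props)
  also have "\<dots> = (\<Sum>k<16. (\<Sum>u<16. Lm sA sB $$ (i,u) * Dm sA sB \<rho> $$ (u,k)) * Lh sA sB $$ (k,j))"
  proof (intro sum.cong refl)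
    fix k :: nat assume k: "k \<in> {..<16}"
    have "(\<Sum>u<16. Lm sA sB $$ (i,u) * Dm sA sB \<rho> $$ (u,k)) = (\<Sum>u<16. if u = k then Lm sA sB $$ (i,k) * Dm sA sB \<rho> $$ (k,k) else 0)"
      using k by (intro sum.cong refl) (auto simp: Dm_def)
    also have "\<dots> = Lm sA sB $$ (i,k) * Dm sA sB \<rho> $$ (k,k)" using k by (simp add: sum.delta')
    finally show "Lm sA sB $$ (i,k) * Dm sA sB \<rho> $$ (k,k) * Lh sA sB $$ (k,j) =
      (\<Sum>u<16. Lm sA sB $$ (i,u) * Dm sA sB \<rho> $$ (u,k)) * Lh sA sB $$ (k,j)" by simp
  qed
  also have "\<dots> = (Lm sA sB * Dm sA sB \<rho> * Lh sA sB) $$ (i,j)"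
    by (rule mult3_idx[symmetric]) (use ij in \<open>auto simp: Lm_def Lh_def Dm_def\<close>)
  finally show "(mat_adjoint ?X * ?X) $$ (i,j) = (Lm sA sB * Dm sA sB \<rho> * Lh sA sB) $$ (i,j)" .
qed (auto simp: Lm_def Lh_def)

lemma proots_lin_list: "proots (\<Prod>a\<leftarrow>xs. [:- a, 1:]) = mset (xs :: complex list)"
proof (induction xs)
  case (Cons a xs)
  have "proots (\<Prod>a\<leftarrow>a # xs. [:- a, 1:]) = proots ([:- a, 1:] * (\<Prod>a\<leftarrow>xs. [:- a, 1:]))" by simp
  also have "\<dots> = proots [:- a, 1:] + proots (\<Prod>a\<leftarrow>xs. [:- a, 1:])"
    by (rule proots_mult) (auto simp: prod_list_zero_iff pCons_eq_0_iff)
  finally show ?case using Cons by simp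
qed simp

lemma trace_norm_X: assumes A: "onb 2 sA" and B: "onb 2 sB" and rho: "\<rho> \<in> carrier_mat 4 4"
  shows "trace_norm (pt_ApBp (measured_state sA sB \<rho>)) = (\<Sum>x<4. \<Sum>y<4. cmod (rp sA sB \<rho> y x))"
proof -
  let ?X = "pt_ApBp (measured_state sA sB \<rho>)"
  let ?D = "Dm sA sB \<rho>"
  have L: "Lm sA sB \<in> carrier_mat 16 16" and Lh: "Lh sA sB \<in> carrier_mat 16 16" and D: "?D \<in> carrier_mat 16 16"
    by (auto simp: Lm_def Lh_def Dm_def)
  have XX: "mat_adjoint ?X * ?X \<in> carrier_mat 16 16" by (intro carrier_matI) simp_all
  have LL: "Lm sA sB * Lh sA sB = 1\<^sub>m 16" by (rule L_Lh[OF A B])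
  have LL2: "Lh sA sB * Lm sA sB = 1\<^sub>m 16" by (rule mat_mult_left_right_inverse[OF L Lh LL])
  have sim: "similar_mat (mat_adjoint ?X * ?X) ?D"
    by (rule similar_matI[OF _ LL LL2 XHX_eq[OF A B rho]]) (use L Lh D XX in auto)
  have ut: "upper_triangular ?D" unfolding upper_triangular_def by (auto simp: Dm_def)
  have cp: "char_poly (mat_adjoint ?X * ?X) = (\<Prod>a\<leftarrow>diag_mat ?D. [:- a, 1:])"
    using char_poly_similar[OF sim] char_poly_upper_triangular[OF D ut] by simp
  have "trace_norm ?X = sum_list (map (\<lambda>x. sqrt (Re x)) (diag_mat ?D))"
    unfolding trace_norm_def cp proots_lin_list by (metis mset_map sum_mset_sum_list)
  also have "\<dots> = (\<Sum>i<16. sqrt (Re (?D $$ (i,i))))"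
    by (simp add: diag_mat_def sum_list_sum_nth atLeast0LessThan Dm_def)
  also have "\<dots> = (\<Sum>i<16. cmod (rp sA sB \<rho> (py i) (px i)))"
    by (intro sum.cong refl) (simp add: Dm_def)
  also have "\<dots> = (\<Sum>x<4. \<Sum>y<4. cmod (rp sA sB \<rho> y x))"
    unfolding sum16 by (intro sum.cong refl) (simp add: cmb_props)
  finally show ?thesis .
qed

lemma negativity_X: assumes A: "onb 2 sA" and B: "onb 2 sB" and rho: "\<rho> \<in> carrier_mat 4 4"
  shows "negativity_AB_ApBp (measured_state sA sB \<rho>) = ((\<Sum>x<4. \<Sum>y<4. cmod (rp sA sB \<rho> y x)) - 1) / 2"
  unfolding negativity_AB_ApBp_def trace_norm_X[OF assms] ..

lemma core3:
  fixes W1 W2 W3 :: complex and d1 d2 d3 :: real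
  assumes n: "(cmod W1)^2 + (cmod W2)^2 + (cmod W3)^2 = 2" and s: "W1^2 + W2^2 + W3^2 = 0"
    and o: "d1 \<le> d3" "d3 \<le> d2"
  shows "d1 * (cmod W1)^2 + d2 * (cmod W2)^2 + d3 * (cmod W3)^2
     + cmod (of_real d1 * W1^2 + of_real d2 * W2^2 + of_real d3 * W3^2) \<ge> 2 * d3"
proof -
  have e1: "of_real d1 * W1^2 + of_real d2 * W2^2 + of_real d3 * W3^2
      = of_real (d2 - d3) * W2^2 - of_real (d3 - d1) * W1^2"
  proof -
    have "of_real d1 * W1^2 + of_real d2 * W2^2 + of_real d3 * W3^2
      = of_real (d2 - d3) * W2^2 - of_real (d3 - d1) * W1^2 + of_real d3 * (W1^2 + W2^2 + W3^2)"
      by (simp add: algebra_simps)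
    thus ?thesis using s by simp
  qed
  have "cmod (of_real (d2 - d3) * W2^2 - of_real (d3 - d1) * W1^2) \<ge>
       cmod (of_real (d3 - d1) * W1^2) - cmod (of_real (d2 - d3) * W2^2)"
    by (metis norm_minus_commute norm_triangle_ineq2)
  also have "cmod (of_real (d3 - d1) * W1^2) = (d3 - d1) * (cmod W1)^2"
    using o by (simp add: norm_mult norm_power del: of_real_diff)
  also have "cmod (of_real (d2 - d3) * W2^2) = (d2 - d3) * (cmod W2)^2"
    using o by (simp add: norm_mult norm_power del: of_real_diff)
  finally have A: "cmod (of_real d1 * W1^2 + of_real d2 * W2^2 + of_real d3 * W3^2) \<ge> (d3 - d1) * (cmod W1)^2 - (d2 - d3) * (cmod W2)^2"
    unfolding e1 .
  have c: "(cmod W3)^2 = 2 - (cmod W1)^2 - (cmod W2)^2" using n by simp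
  have B: "d1 * (cmod W1)^2 + d2 * (cmod W2)^2 + d3 * (cmod W3)^2 = 2 * d3 - (d3 - d1) * (cmod W1)^2 + (d2 - d3) * (cmod W2)^2"
    unfolding c by (simp add: algebra_simps)
  show ?thesis using A B by linarith
qed

lemma median3: fixes a b c :: real
  defines "m \<equiv> sort [a,b,c] ! 1"
  shows "(a \<le> m \<and> m \<le> b \<and> m = c) \<or> (b \<le> m \<and> m \<le> a \<and> m = c) \<or> (a \<le> m \<and> m \<le> c \<and> m = b)
    \<or> (c \<le> m \<and> m \<le> a \<and> m = b) \<or> (b \<le> m \<and> m \<le> c \<and> m = a) \<or> (c \<le> m \<and> m \<le> b \<and> m = a)"
  unfolding m_def by (cases "a \<le> b"; cases "b \<le> c"; cases "a \<le> c") auto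

lemma zcnjC: "z * cnj z = (complex_of_real (cmod z))^2" "cnj z * z = (complex_of_real (cmod z))^2"
  using complex_norm_square[of z] by (simp_all add: mult.commute)

lemma cmod_sq_of: "complex_of_real ((cmod z)^2) = z * cnj z"
  by (simp add: zcnjC)

lemma Kbound:
  fixes g0 g1 h0 h1 :: complex and c1 c2 c3 :: real
  assumes ng: "cnj g0 * g0 + cnj g1 * g1 = 1" and nh: "cnj h0 * h0 + cnj h1 * h1 = 1"
    and o: "cnj g0 * h0 + cnj g1 * h1 = 0"
  defines "u \<equiv> cnj g0 * h0" and "x \<equiv> cnj g0 * h1" and "y \<equiv> cnj g1 * h0"
  defines "K00 \<equiv> of_real (c3/2) * u" and "K11 \<equiv> - of_real (c3/2) * u"
    and "K01 \<equiv> of_real ((c1 - c2)/4) * x + of_real ((c1 + c2)/4) * y"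
    and "K10 \<equiv> of_real ((c1 + c2)/4) * x + of_real ((c1 - c2)/4) * y"
  shows "(cmod K00)^2 + (cmod K01)^2 + (cmod K10)^2 + (cmod K11)^2 + 2 * cmod (K00 * K11 - K01 * K10)
     \<ge> (sort [\<bar>c1\<bar>, \<bar>c2\<bar>, \<bar>c3\<bar>] ! 1)^2 / 4"
proof -
  define W1 where "W1 = x + y"
  define W2 where "W2 = \<i> * (x - y)"
  define W3 where "W3 = 2 * u"
  define v where "v = cnj g1 * h1"
  have nW: "(cmod W1)^2 + (cmod W2)^2 + (cmod W3)^2 = 2"
  proof -
    have "complex_of_real ((cmod W1)^2 + (cmod W2)^2 + (cmod W3)^2) = W1 * cnj W1 + W2 * cnj W2 + W3 * cnj W3"
      by (simp only: of_real_add cmod_sq_of)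
    also have "\<dots> = 2 * (cnj g0 * g0 + cnj g1 * g1) * (cnj h0 * h0 + cnj h1 * h1)
       + 2 * ((u + v) * cnj (u + v) - (u + v) * cnj v - v * cnj (u + v))"
      unfolding W1_def W2_def W3_def u_def x_def y_def v_def by (simp add: algebra_simps)
    also have "\<dots> = 2" using ng nh o unfolding u_def v_def by simp
    finally show ?thesis by (metis of_real_numeral of_real_eq_iff)
  qed
  have sW: "W1^2 + W2^2 + W3^2 = 0"
  proof -
    have "W1^2 + W2^2 + W3^2 = 4 * u * (u + v)"
      unfolding W1_def W2_def W3_def u_def x_def y_def v_def by (simp add: algebra_simps power2_eq_square)
    also have "\<dots> = 0" using o unfolding u_def v_def by simp
    finally show ?thesis .
  qed
  define d1 where "d1 = c1^2"
  define d2 where "d2 = c2^2"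
  define d3 where "d3 = c3^2"
  have F: "(cmod K00)^2 + (cmod K01)^2 + (cmod K10)^2 + (cmod K11)^2 = (d1 * (cmod W1)^2 + d2 * (cmod W2)^2 + d3 * (cmod W3)^2) / 8"
  proof -
    have "complex_of_real (8 * ((cmod K00)^2 + (cmod K01)^2 + (cmod K10)^2 + (cmod K11)^2)) =
       complex_of_real (d1 * (cmod W1)^2 + d2 * (cmod W2)^2 + d3 * (cmod W3)^2)"
      unfolding of_real_add of_real_mult cmod_sq_of
      unfolding K00_def K01_def K10_def K11_def W1_def W2_def W3_def d1_def d2_def d3_def
      apply (simp add: algebra_simps power2_eq_square) by (simp add: field_simps)
    thus ?thesis by (simp only: of_real_eq_iff) simp
  qed
  have D: "K00 * K11 - K01 * K10 = - (of_real d1 * W1^2 + of_real d2 * W2^2 + of_real d3 * W3^2) / 16"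
    unfolding K00_def K01_def K10_def K11_def W1_def W2_def W3_def d1_def d2_def d3_def
    apply (simp add: algebra_simps power2_eq_square) by (simp add: field_simps)
  define m where "m = sort [\<bar>c1\<bar>, \<bar>c2\<bar>, \<bar>c3\<bar>] ! 1"
  have M: "(\<bar>c1\<bar> \<le> m \<and> m \<le> \<bar>c2\<bar> \<and> m = \<bar>c3\<bar>) \<or> (\<bar>c2\<bar> \<le> m \<and> m \<le> \<bar>c1\<bar> \<and> m = \<bar>c3\<bar>) \<or> (\<bar>c1\<bar> \<le> m \<and> m \<le> \<bar>c3\<bar> \<and> m = \<bar>c2\<bar>)
    \<or> (\<bar>c3\<bar> \<le> m \<and> m \<le> \<bar>c1\<bar> \<and> m = \<bar>c2\<bar>) \<or> (\<bar>c2\<bar> \<le> m \<and> m \<le> \<bar>c3\<bar> \<and> m = \<bar>c1\<bar>) \<or> (\<bar>c3\<bar> \<le> m \<and> m \<le> \<bar>c2\<bar> \<and> m = \<bar>c1\<bar>)"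
    unfolding m_def by (rule median3)
  have sq: "\<bar>a\<bar> \<le> \<bar>b\<bar> \<Longrightarrow> a^2 \<le> b^2" for a b :: real by (simp add: abs_le_square_iff)
  let ?L = "d1 * (cmod W1)^2 + d2 * (cmod W2)^2 + d3 * (cmod W3)^2
     + cmod (of_real d1 * W1^2 + of_real d2 * W2^2 + of_real d3 * W3^2)"
  have core: "?L \<ge> 2 * m^2"
  proof -
    { assume h: "\<bar>c1\<bar> \<le> m \<and> m \<le> \<bar>c2\<bar> \<and> m = \<bar>c3\<bar>"
      have "d1 \<le> d3" "d3 \<le> d2" using h unfolding d1_def d2_def d3_def by (auto intro: sq)
      from core3[OF nW sW this] have "?L \<ge> 2 * d3" .
      moreover have "m^2 = d3" using h unfolding d3_def by simp
      ultimately have ?thesis by simp }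
    moreover
    { assume h: "\<bar>c2\<bar> \<le> m \<and> m \<le> \<bar>c1\<bar> \<and> m = \<bar>c3\<bar>"
      have o: "d2 \<le> d3" "d3 \<le> d1" using h unfolding d1_def d2_def d3_def by (auto intro: sq)
      have n': "(cmod W2)^2 + (cmod W1)^2 + (cmod W3)^2 = 2" using nW by (simp add: ac_simps)
      have s': "W2^2 + W1^2 + W3^2 = 0" using sW by (simp add: ac_simps)
      from core3[OF n' s' o] have "?L \<ge> 2 * d3" by (simp add: ac_simps)
      moreover have "m^2 = d3" using h unfolding d3_def by simp
      ultimately have ?thesis by simp }
    moreover
    { assume h: "\<bar>c1\<bar> \<le> m \<and> m \<le> \<bar>c3\<bar> \<and> m = \<bar>c2\<bar>"
      have o: "d1 \<le> d2" "d2 \<le> d3" using h unfolding d1_def d2_def d3_def by (auto intro: sq)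
      have n': "(cmod W1)^2 + (cmod W3)^2 + (cmod W2)^2 = 2" using nW by (simp add: ac_simps)
      have s': "W1^2 + W3^2 + W2^2 = 0" using sW by (simp add: ac_simps)
      from core3[OF n' s' o] have "?L \<ge> 2 * d2" by (simp add: ac_simps)
      moreover have "m^2 = d2" using h unfolding d2_def by simp
      ultimately have ?thesis by simp }
    moreover
    { assume h: "\<bar>c3\<bar> \<le> m \<and> m \<le> \<bar>c1\<bar> \<and> m = \<bar>c2\<bar>"
      have o: "d3 \<le> d2" "d2 \<le> d1" using h unfolding d1_def d2_def d3_def by (auto intro: sq)
      have n': "(cmod W3)^2 + (cmod W1)^2 + (cmod W2)^2 = 2" using nW by (simp add: ac_simps)
      have s': "W3^2 + W1^2 + W2^2 = 0" using sW by (simp add: ac_simps)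
      from core3[OF n' s' o] have "?L \<ge> 2 * d2" by (simp add: ac_simps)
      moreover have "m^2 = d2" using h unfolding d2_def by simp
      ultimately have ?thesis by simp }
    moreover
    { assume h: "\<bar>c2\<bar> \<le> m \<and> m \<le> \<bar>c3\<bar> \<and> m = \<bar>c1\<bar>"
      have o: "d2 \<le> d1" "d1 \<le> d3" using h unfolding d1_def d2_def d3_def by (auto intro: sq)
      have n': "(cmod W2)^2 + (cmod W3)^2 + (cmod W1)^2 = 2" using nW by (simp add: ac_simps)
      have s': "W2^2 + W3^2 + W1^2 = 0" using sW by (simp add: ac_simps)
      from core3[OF n' s' o] have "?L \<ge> 2 * d1" by (simp add: ac_simps)
      moreover have "m^2 = d1" using h unfolding d1_def by simp
      ultimately have ?thesis by simp }
    moreover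
    { assume h: "\<bar>c3\<bar> \<le> m \<and> m \<le> \<bar>c2\<bar> \<and> m = \<bar>c1\<bar>"
      have o: "d3 \<le> d1" "d1 \<le> d2" using h unfolding d1_def d2_def d3_def by (auto intro: sq)
      have n': "(cmod W3)^2 + (cmod W2)^2 + (cmod W1)^2 = 2" using nW by (simp add: ac_simps)
      have s': "W3^2 + W2^2 + W1^2 = 0" using sW by (simp add: ac_simps)
      from core3[OF n' s' o] have "?L \<ge> 2 * d1" by (simp add: ac_simps)
      moreover have "m^2 = d1" using h unfolding d1_def by simp
      ultimately have ?thesis by simp }
    ultimately show ?thesis using M by blast
  qed
  have "cmod (K00 * K11 - K01 * K10) = cmod (of_real d1 * W1^2 + of_real d2 * W2^2 + of_real d3 * W3^2) / 16"
    unfolding D norm_divide norm_minus_cancel by simp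
  with F core show ?thesis unfolding m_def[symmetric] by simp
qed

lemma sum2C: "(\<Sum>i<(2::nat). f i) = f 0 + (f 1 :: 'a::comm_monoid_add)"
  by (simp add: numeral_eq_Suc)

definition det2 :: "(nat \<Rightarrow> nat \<Rightarrow> complex) \<Rightarrow> complex" where
  "det2 X = X 0 0 * X 1 1 - X 0 1 * X 1 0"

lemma det2_mult: "det2 (\<lambda>i j. \<Sum>k<2. X i k * Y k j) = det2 X * det2 Y"
  unfolding det2_def sum2C by (simp add: algebra_simps)

lemma frob2:
  fixes M :: "nat \<Rightarrow> nat \<Rightarrow> complex"
  assumes M: "\<And>r s. r < 2 \<Longrightarrow> s < 2 \<Longrightarrow> (\<Sum>a<2. M r a * cnj (M s a)) = (if r = s then 1 else 0)"
  shows "(\<Sum>a<2. (cmod (\<Sum>r<2. c r * M r a))^2) = (\<Sum>r<2. (cmod (c r))^2)"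
proof -
  have "complex_of_real (\<Sum>a<2. (cmod (\<Sum>r<2. c r * M r a))^2) =
     (\<Sum>a<2. (\<Sum>r<2. c r * M r a) * cnj (\<Sum>r<2. c r * M r a))"
    by (simp only: of_real_sum cmod_sq_of)
  also have "\<dots> = c 0 * cnj (c 0) * (\<Sum>a<2. M 0 a * cnj (M 0 a)) + c 0 * cnj (c 1) * (\<Sum>a<2. M 0 a * cnj (M 1 a))
     + c 1 * cnj (c 0) * (\<Sum>a<2. M 1 a * cnj (M 0 a)) + c 1 * cnj (c 1) * (\<Sum>a<2. M 1 a * cnj (M 1 a))"
    unfolding sum2C by (simp add: algebra_simps)
  also have "\<dots> = c 0 * cnj (c 0) + c 1 * cnj (c 1)" using M[of 0 0] M[of 0 1] M[of 1 0] M[of 1 1] by simp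
  also have "\<dots> = complex_of_real (\<Sum>r<2. (cmod (c r))^2)" by (simp only: sum2C of_real_add cmod_sq_of)
  finally show ?thesis by (simp only: of_real_eq_iff)
qed

lemma entry_bound:
  fixes k00 k01 k10 k11 :: complex
  shows "(cmod k00 + cmod k01 + cmod k10 + cmod k11)^2 \<ge>
     (cmod k00)^2 + (cmod k01)^2 + (cmod k10)^2 + (cmod k11)^2 + 2 * cmod (k00 * k11 - k01 * k10)"
proof -
  have "cmod (k00 * k11 - k01 * k10) \<le> cmod k00 * cmod k11 + cmod k01 * cmod k10"
    by (metis norm_mult norm_triangle_ineq4)
  moreover have "0 \<le> cmod k00 * cmod k01" "0 \<le> cmod k00 * cmod k10" "0 \<le> cmod k01 * cmod k11" "0 \<le> cmod k10 * cmod k11"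
    by simp_all
  moreover have "(cmod k00 + cmod k01 + cmod k10 + cmod k11)^2 =
     (cmod k00)^2 + (cmod k01)^2 + (cmod k10)^2 + (cmod k11)^2 + 2 * (cmod k00 * cmod k11) + 2 * (cmod k01 * cmod k10)
     + 2 * (cmod k00 * cmod k01) + 2 * (cmod k00 * cmod k10) + 2 * (cmod k01 * cmod k11) + 2 * (cmod k10 * cmod k11)"
    by (simp add: power2_eq_square algebra_simps)
  ultimately show ?thesis by linarith
qed

lemma unitary_invariance:
  fixes A K :: "nat \<Rightarrow> nat \<Rightarrow> complex"
  assumes row: "\<And>r s. r < 2 \<Longrightarrow> s < 2 \<Longrightarrow> (\<Sum>a<2. A r a * cnj (A s a)) = (if r = s then 1 else 0)"
    and col: "\<And>a b. a < 2 \<Longrightarrow> b < 2 \<Longrightarrow> (\<Sum>r<2. cnj (A r a) * A r b) = (if a = b then 1 else 0)"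
  defines "K' \<equiv> \<lambda>a a'. \<Sum>r<2. \<Sum>r'<2. cnj (A r a) * K r r' * A r' a'"
  shows "(\<Sum>a<2. \<Sum>a'<2. (cmod (K' a a'))^2) = (\<Sum>r<2. \<Sum>r'<2. (cmod (K r r'))^2)"
    and "cmod (det2 K') = cmod (det2 K)"
proof -
  define N where "N = (\<lambda>r a'. \<Sum>r'<2. K r r' * A r' a')"
  have K'N: "K' a a' = (\<Sum>r<2. N r a' * cnj (A r a))" for a a'
    unfolding K'_def N_def by (simp add: sum_distrib_left sum_distrib_right ac_simps)
  have rowc: "(\<Sum>a<2. cnj (A r a) * cnj (cnj (A s a))) = (if r = s then 1 else 0)" if "r < 2" "s < 2" for r s
  proof -
    have "(\<Sum>a<2. cnj (A r a) * cnj (cnj (A s a))) = cnj (\<Sum>a<2. A r a * cnj (A s a))" by simp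
    also have "\<dots> = (if r = s then 1 else 0)" using row[OF that] by simp
    finally show ?thesis .
  qed
  have "(\<Sum>a<2. \<Sum>a'<2. (cmod (K' a a'))^2) = (\<Sum>a'<2. \<Sum>a<2. (cmod (\<Sum>r<2. N r a' * cnj (A r a)))^2)"
    unfolding K'N by (rule sum.swap)
  also have "\<dots> = (\<Sum>a'<2. \<Sum>r<2. (cmod (N r a'))^2)"
    by (rule sum.cong[OF refl], rule frob2[where M="\<lambda>r a. cnj (A r a)", OF rowc])
  also have "\<dots> = (\<Sum>r<2. \<Sum>a'<2. (cmod (\<Sum>r'<2. K r r' * A r' a'))^2)"
    unfolding N_def by (rule sum.swap)
  also have "\<dots> = (\<Sum>r<2. \<Sum>r'<2. (cmod (K r r'))^2)"
    by (rule sum.cong[OF refl], rule frob2[OF row])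
  finally show "(\<Sum>a<2. \<Sum>a'<2. (cmod (K' a a'))^2) = (\<Sum>r<2. \<Sum>r'<2. (cmod (K r r'))^2)" .
  define Ah where "Ah = (\<lambda>a r. cnj (A r a))"
  have K'2: "K' = (\<lambda>a a'. \<Sum>r<2. Ah a r * N r a')"
    unfolding K'N Ah_def by (auto simp: ac_simps)
  have "det2 K' = det2 Ah * (det2 K * det2 A)"
    unfolding K'2 det2_mult N_def by (simp add: det2_mult)
  moreover have "det2 Ah * det2 A = 1"
  proof -
    have "det2 Ah * det2 A = det2 (\<lambda>i j. \<Sum>k<2. Ah i k * A k j)" by (simp add: det2_mult)
    also have "(\<lambda>i j. \<Sum>k<2. Ah i k * A k j) = (\<lambda>i j. \<Sum>k<2. cnj (A k i) * A k j)" unfolding Ah_def ..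
    also have "det2 \<dots> = 1" unfolding det2_def using col[of 0 0] col[of 1 1] col[of 0 1] col[of 1 0] by simp
    finally show ?thesis .
  qed
  ultimately have "det2 K' = det2 K * (det2 Ah * det2 A)" by (simp add: ac_simps)
  also have "\<dots> = det2 K" using \<open>det2 Ah * det2 A = 1\<close> by simp
  finally show "cmod (det2 K') = cmod (det2 K)" by simp
qed

definition hb :: "nat \<Rightarrow> complex vec" where
  "hb k = vec 2 (\<lambda>i. if i = 0 then complex_of_real s2 else if k = 0 then complex_of_real s2 else - complex_of_real s2)"

lemma s2c: "complex_of_real s2 * complex_of_real s2 = 1/2"
  by (metis of_real_divide of_real_mult of_real_1 of_real_numeral s2sq)

lemma s2c2: "complex_of_real s2 * (complex_of_real s2 * z) = z / 2"
  by (metis mult.assoc s2c times_divide_eq_left mult_1 mult.commute)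

lemma hb_vals: "hb 0 $ 0 = complex_of_real s2" "hb 0 $ 1 = complex_of_real s2" "hb 1 $ 0 = complex_of_real s2" "hb 1 $ 1 = - complex_of_real s2"
  by (simp_all add: hb_def)

lemma rp_hb: "x < 4 \<Longrightarrow> y < 4 \<Longrightarrow> rp hb hb (bell_diag p) x y = complex_of_real (rr (\<lambda>i. [p 0, p 3, p 2, p 1] ! i) x y)"
  unfolding less4
  apply (elim disjE)
  apply (simp_all add: rp_def Sm_def sum4 bell_diag_eq rr_def hb_vals hb_vals[unfolded One_nat_def] s2c s2c2 algebra_simps)
  by (simp_all add: field_simps)

definition yb :: "nat \<Rightarrow> complex vec" where
  "yb k = vec 2 (\<lambda>i. if i = 0 then complex_of_real s2 else if k = 0 then \<i> * complex_of_real s2 else - \<i> * complex_of_real s2)"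
definition cb :: "nat \<Rightarrow> complex vec" where
  "cb k = vec 2 (\<lambda>i. if i = k then 1 else 0)"

lemma yb_vals: "yb 0 $ 0 = complex_of_real s2" "yb 0 $ 1 = \<i> * complex_of_real s2" "yb 1 $ 0 = complex_of_real s2" "yb 1 $ 1 = - \<i> * complex_of_real s2"
  by (simp_all add: yb_def)
lemma cb_vals: "cb 0 $ 0 = 1" "cb 0 $ 1 = 0" "cb 1 $ 0 = 0" "cb 1 $ 1 = 1"
  by (simp_all add: cb_def)

lemma rp_yb: "x < 4 \<Longrightarrow> y < 4 \<Longrightarrow> rp yb yb (bell_diag p) x y = complex_of_real (rr (\<lambda>i. [p 3, p 0, p 2, p 1] ! i) x y)"
  unfolding less4
  apply (elim disjE)
  apply (simp_all add: rp_def Sm_def sum4 bell_diag_eq rr_def yb_vals yb_vals[unfolded One_nat_def] s2c s2c2 algebra_simps)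
  by (simp_all add: field_simps)

lemma rp_cb: "x < 4 \<Longrightarrow> y < 4 \<Longrightarrow> rp cb cb (bell_diag p) x y = complex_of_real (rr p x y)"
  unfolding less4
  by (elim disjE) (simp_all add: rp_def Sm_def sum4 bell_diag_eq rr_def cb_vals cb_vals[unfolded One_nat_def])

lemma onbI2: assumes c: "\<And>k. s k \<in> carrier_vec 2"
  and v: "\<And>j k. j < 2 \<Longrightarrow> k < 2 \<Longrightarrow> s j $ 0 * cnj (s k $ 0) + s j $ 1 * cnj (s k $ 1) = (if j = k then 1 else 0)"
  shows "onb 2 s"
proof -
  have "s j \<bullet>c s k = s j $ 0 * cnj (s k $ 0) + s j $ 1 * cnj (s k $ 1)" for j k
    using c[of k] by (simp add: scalar_prod_def sum2 atLeast0LessThan)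
  thus ?thesis unfolding onb_def using c v by simp
qed

lemma onb_hb: "onb 2 hb"
proof (rule onbI2)
  fix j k :: nat assume "j < 2" "k < 2"
  thus "hb j $ 0 * cnj (hb k $ 0) + hb j $ 1 * cnj (hb k $ 1) = (if j = k then 1 else 0)"
    unfolding less2 by (elim disjE) (simp_all add: hb_vals[unfolded One_nat_def] hb_vals s2c)
qed (simp add: hb_def)

lemma onb_yb: "onb 2 yb"
proof (rule onbI2)
  fix j k :: nat assume "j < 2" "k < 2"
  thus "yb j $ 0 * cnj (yb k $ 0) + yb j $ 1 * cnj (yb k $ 1) = (if j = k then 1 else 0)"
    unfolding less2 by (elim disjE) (simp_all add: yb_vals[unfolded One_nat_def] yb_vals s2c s2c2 algebra_simps)
qed (simp add: yb_def)

lemma onb_cb: "onb 2 cb"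
proof (rule onbI2)
  fix j k :: nat assume "j < 2" "k < 2"
  thus "cb j $ 0 * cnj (cb k $ 0) + cb j $ 1 * cnj (cb k $ 1) = (if j = k then 1 else 0)"
    unfolding less2 by (elim disjE) (simp_all add: cb_vals[unfolded One_nat_def] cb_vals)
qed (simp add: cb_def)

lemma sum_rr: assumes "\<And>i. i < 4 \<Longrightarrow> q i \<ge> 0"
  shows "(\<Sum>x<4. \<Sum>y<4. cmod (complex_of_real (rr q y x))) = q 0 + q 1 + q 2 + q 3 + \<bar>q 0 - q 3\<bar> + \<bar>q 1 - q 2\<bar>"
proof -
  have "(\<Sum>x<4. \<Sum>y<4. cmod (complex_of_real (rr q y x))) = (\<Sum>x<4. \<Sum>y<4. \<bar>rr q y x\<bar>)" by simp
  also have "\<dots> = 2 * \<bar>(q 0 + q 3)/2\<bar> + 2 * \<bar>(q 1 + q 2)/2\<bar> + 2 * \<bar>(q 0 - q 3)/2\<bar> + 2 * \<bar>(q 1 - q 2)/2\<bar>"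
    by (simp add: sum4 rr_def)
  also have "\<dots> = q 0 + q 1 + q 2 + q 3 + \<bar>q 0 - q 3\<bar> + \<bar>q 1 - q 2\<bar>"
    using assms[of 0] assms[of 1] assms[of 2] assms[of 3] by (simp add: field_simps)
  finally show ?thesis .
qed

definition Kb :: "(nat \<Rightarrow> complex vec) \<Rightarrow> nat \<Rightarrow> nat \<Rightarrow> complex mat \<Rightarrow> nat \<Rightarrow> nat \<Rightarrow> complex" where
  "Kb sB bg bh \<rho> r r' = (\<Sum>b<2. \<Sum>b'<2. cnj (sB bg $ b) * \<rho> $$ (2*r+b, 2*r'+b') * sB bh $ b')"

lemma rp_block: assumes "bg < 2" "bh < 2"
  shows "rp sA sB \<rho> (2*a+bg) (2*a'+bh) = (\<Sum>r<2. \<Sum>r'<2. cnj (sA a $ r) * Kb sB bg bh \<rho> r r' * sA a' $ r')"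
proof -
  have d: "(2*a+bg) div 2 = a" "(2*a+bg) mod 2 = bg" "(2*a'+bh) div 2 = a'" "(2*a'+bh) mod 2 = bh"
    using assms by auto
  show ?thesis unfolding rp_def Kb_def Sm_def d
    apply (simp only: sum4 sum2)
    apply simp
    by (simp add: numeral_eq_Suc algebra_simps)
qed

lemma Kb_vals:
  "Kb sB bg bh (bell_diag p) 0 0 = cnj (sB bg $ 0) * complex_of_real ((p 0 + p 3)/2) * sB bh $ 0 + cnj (sB bg $ 1) * complex_of_real ((p 1 + p 2)/2) * sB bh $ 1"
  "Kb sB bg bh (bell_diag p) 1 1 = cnj (sB bg $ 0) * complex_of_real ((p 1 + p 2)/2) * sB bh $ 0 + cnj (sB bg $ 1) * complex_of_real ((p 0 + p 3)/2) * sB bh $ 1"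
  "Kb sB bg bh (bell_diag p) 0 1 = cnj (sB bg $ 0) * complex_of_real ((p 0 - p 3)/2) * sB bh $ 1 + cnj (sB bg $ 1) * complex_of_real ((p 1 - p 2)/2) * sB bh $ 0"
  "Kb sB bg bh (bell_diag p) 1 0 = cnj (sB bg $ 0) * complex_of_real ((p 1 - p 2)/2) * sB bh $ 1 + cnj (sB bg $ 1) * complex_of_real ((p 0 - p 3)/2) * sB bh $ 0"
  by (simp_all add: Kb_def sum2 bell_diag_eq rr_def)

lemma block_bound:
  fixes p :: "nat \<Rightarrow> real"
  assumes A: "onb 2 sA" and B: "onb 2 sB" and bgh: "bg < 2" "bh < 2" "bg \<noteq> bh"
  defines "c1 \<equiv> p 0 + p 1 - p 2 - p 3" and "c2 \<equiv> - p 0 + p 1 - p 2 + p 3" and "c3 \<equiv> p 0 - p 1 - p 2 + p 3"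
  shows "(\<Sum>a<2. \<Sum>a'<2. cmod (rp sA sB (bell_diag p) (2*a+bg) (2*a'+bh))) \<ge> sort [\<bar>c1\<bar>, \<bar>c2\<bar>, \<bar>c3\<bar>] ! 1 / 2"
proof -
  define m where "m = sort [\<bar>c1\<bar>, \<bar>c2\<bar>, \<bar>c3\<bar>] ! 1"
  have m0: "m \<ge> 0" using median3[of "\<bar>c1\<bar>" "\<bar>c2\<bar>" "\<bar>c3\<bar>"] unfolding m_def by auto
  define g0 g1 h0 h1 where "g0 = sB bg $ 0" and "g1 = sB bg $ 1" and "h0 = sB bh $ 0" and "h1 = sB bh $ 1"
  have ng: "cnj g0 * g0 + cnj g1 * g1 = 1" using col_orth[OF B bgh(1) bgh(1)] unfolding g0_def g1_def by (simp add: sum2)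
  have nh: "cnj h0 * h0 + cnj h1 * h1 = 1" using col_orth[OF B bgh(2) bgh(2)] unfolding h0_def h1_def by (simp add: sum2)
  have o: "cnj g0 * h0 + cnj g1 * h1 = 0" using col_orth[OF B bgh(1) bgh(2)] bgh(3) unfolding g0_def g1_def h0_def h1_def by (simp add: sum2)
  define K where "K = Kb sB bg bh (bell_diag p)"
  have v: "cnj g1 * h1 = - (cnj g0 * h0)" using o by (simp add: eq_neg_iff_add_eq_0 add.commute)
  have K00: "K 0 0 = of_real (c3/2) * (cnj g0 * h0)"
  proof -
    have "K 0 0 = of_real ((p 0 + p 3)/2) * (cnj g0 * h0) + of_real ((p 1 + p 2)/2) * (cnj g1 * h1)"
      unfolding K_def Kb_vals g0_def g1_def h0_def h1_def by (simp add: ac_simps)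
    also have "\<dots> = of_real (c3/2) * (cnj g0 * h0)" unfolding v c3_def by (simp add: field_simps)
    finally show ?thesis .
  qed
  have K11: "K 1 1 = - of_real (c3/2) * (cnj g0 * h0)"
  proof -
    have "K 1 1 = of_real ((p 1 + p 2)/2) * (cnj g0 * h0) + of_real ((p 0 + p 3)/2) * (cnj g1 * h1)"
      unfolding K_def Kb_vals g0_def g1_def h0_def h1_def by (simp add: ac_simps)
    also have "\<dots> = - of_real (c3/2) * (cnj g0 * h0)" unfolding v c3_def by (simp add: field_simps)
    finally show ?thesis .
  qed
  have K01: "K 0 1 = of_real ((c1 - c2)/4) * (cnj g0 * h1) + of_real ((c1 + c2)/4) * (cnj g1 * h0)"
    unfolding K_def Kb_vals g0_def g1_def h0_def h1_def c1_def c2_def by (simp add: field_simps)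
  have K10: "K 1 0 = of_real ((c1 + c2)/4) * (cnj g0 * h1) + of_real ((c1 - c2)/4) * (cnj g1 * h0)"
    unfolding K_def Kb_vals g0_def g1_def h0_def h1_def c1_def c2_def by (simp add: field_simps)
  have Kbnd: "(cmod (K 0 0))^2 + (cmod (K 0 1))^2 + (cmod (K 1 0))^2 + (cmod (K 1 1))^2 + 2 * cmod (det2 K) \<ge> m^2 / 4"
    unfolding det2_def K00 K01 K10 K11 m_def by (rule Kbound[OF ng nh o])
  define Am where "Am = (\<lambda>r a. sA a $ r)"
  define K' where "K' = (\<lambda>a a'. \<Sum>r<2. \<Sum>r'<2. cnj (Am r a) * K r r' * Am r' a')"
  have rowA: "(\<Sum>a<2. Am r a * cnj (Am s a)) = (if r = s then 1 else 0)" if "r < 2" "s < 2" for r s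
    unfolding Am_def by (rule row_orth[OF A that])
  have colA: "(\<Sum>r<2. cnj (Am r a) * Am r b) = (if a = b then 1 else 0)" if "a < 2" "b < 2" for a b
    unfolding Am_def by (rule col_orth[OF A that])
  have UI1: "(\<Sum>a<2. \<Sum>a'<2. (cmod (K' a a'))^2) = (\<Sum>r<2. \<Sum>r'<2. (cmod (K r r'))^2)"
    unfolding K'_def by (rule unitary_invariance(1)[OF rowA colA])
  have UI2: "cmod (det2 K') = cmod (det2 K)"
    unfolding K'_def by (rule unitary_invariance(2)[OF rowA colA])
  have rpK: "rp sA sB (bell_diag p) (2*a+bg) (2*a'+bh) = K' a a'" for a a'
    unfolding rp_block[OF bgh(1,2)] K'_def K_def Am_def ..
  define S where "S = (\<Sum>a<2. \<Sum>a'<2. cmod (rp sA sB (bell_diag p) (2*a+bg) (2*a'+bh)))"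
  have S: "S = cmod (K' 0 0) + cmod (K' 0 1) + cmod (K' 1 0) + cmod (K' 1 1)"
    unfolding S_def rpK by (simp add: sum2 add.assoc)
  have "S^2 \<ge> (cmod (K' 0 0))^2 + (cmod (K' 0 1))^2 + (cmod (K' 1 0))^2 + (cmod (K' 1 1))^2 + 2 * cmod (det2 K')"
    unfolding S det2_def by (rule entry_bound)
  also have "(cmod (K' 0 0))^2 + (cmod (K' 0 1))^2 + (cmod (K' 1 0))^2 + (cmod (K' 1 1))^2 =
      (cmod (K 0 0))^2 + (cmod (K 0 1))^2 + (cmod (K 1 0))^2 + (cmod (K 1 1))^2"
    using UI1 by (simp only: sum2 add.assoc)
  also have "cmod (det2 K') = cmod (det2 K)" by (rule UI2)
  finally have "S^2 \<ge> (m/2)^2" using Kbnd by (simp add: power_divide)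
  hence "m/2 \<le> S" by (rule power2_le_imp_le) (simp add: S_def sum_nonneg)
  thus ?thesis unfolding S_def m_def .
qed

lemma sum_delta_mult: "u < (4::nat) \<Longrightarrow> (\<Sum>v<4. f v * (if v = u then 1 else 0)) = (f u :: complex)"
proof -
  assume u: "u < 4"
  have "(\<Sum>v<4. f v * (if v = u then 1 else 0)) = (\<Sum>v<4. if v = u then f v else 0)" by (intro sum.cong) auto
  also have "\<dots> = f u" using u by (simp add: sum.delta)
  finally show ?thesis .
qed

lemma diag_sum: assumes A: "onb 2 sA" and B: "onb 2 sB"
  shows "(\<Sum>x<4. rp sA sB \<rho> x x) = (\<Sum>u<4. \<rho> $$ (u,u))"
proof -
  have "(\<Sum>x<4. rp sA sB \<rho> x x) = (\<Sum>u<4. \<Sum>v<4. \<rho> $$ (u,v) * (\<Sum>x<4. Sm sA sB v x * cnj (Sm sA sB u x)))"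
  proof -
    have "(\<Sum>x<4. rp sA sB \<rho> x x) = (\<Sum>x<4. \<Sum>u<4. \<Sum>v<4. cnj (Sm sA sB u x) * \<rho> $$ (u,v) * Sm sA sB v x)"
      by (simp add: rp_def)
    also have "\<dots> = (\<Sum>u<4. \<Sum>x<4. \<Sum>v<4. cnj (Sm sA sB u x) * \<rho> $$ (u,v) * Sm sA sB v x)" by (rule sum.swap)
    also have "\<dots> = (\<Sum>u<4. \<Sum>v<4. \<Sum>x<4. cnj (Sm sA sB u x) * \<rho> $$ (u,v) * Sm sA sB v x)"
      by (rule sum.cong[OF refl], rule sum.swap)
    also have "\<dots> = (\<Sum>u<4. \<Sum>v<4. \<rho> $$ (u,v) * (\<Sum>x<4. Sm sA sB v x * cnj (Sm sA sB u x)))"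
      by (simp add: sum_distrib_left ac_simps)
    finally show ?thesis .
  qed
  also have "\<dots> = (\<Sum>u<4. \<Sum>v<4. \<rho> $$ (u,v) * (if v = u then 1 else 0))"
    by (intro sum.cong refl) (simp add: Sm_row[OF A B])
  also have "\<dots> = (\<Sum>u<4. \<rho> $$ (u,u))" by (intro sum.cong refl) (simp add: sum_delta_mult)
  finally show ?thesis .
qed

lemma lower_total:
  fixes p :: "nat \<Rightarrow> real"
  assumes A: "onb 2 sA" and B: "onb 2 sB" and ps: "(\<Sum>i<4. p i) = 1"
  defines "c1 \<equiv> p 0 + p 1 - p 2 - p 3" and "c2 \<equiv> - p 0 + p 1 - p 2 + p 3" and "c3 \<equiv> p 0 - p 1 - p 2 + p 3"
  shows "(\<Sum>x<4. \<Sum>y<4. cmod (rp sA sB (bell_diag p) y x)) \<ge> 1 + sort [\<bar>c1\<bar>, \<bar>c2\<bar>, \<bar>c3\<bar>] ! 1"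
proof -
  define f where "f i j = cmod (rp sA sB (bell_diag p) i j)" for i j
  define m where "m = sort [\<bar>c1\<bar>, \<bar>c2\<bar>, \<bar>c3\<bar>] ! 1"
  have tr: "(\<Sum>x<4. rp sA sB (bell_diag p) x x) = 1"
  proof -
    have "(\<Sum>x<4. rp sA sB (bell_diag p) x x) = (\<Sum>u<4. bell_diag p $$ (u,u))" by (rule diag_sum[OF A B])
    also have "\<dots> = complex_of_real (\<Sum>i<4. p i)" by (simp add: sum4 bell_diag_eq rr_def field_simps)
    finally show ?thesis using ps by simp
  qed
  have d: "1 \<le> f 0 0 + f 1 1 + f 2 2 + f 3 3"
  proof -
    have "1 = cmod (\<Sum>x<4. rp sA sB (bell_diag p) x x)" using tr by simp
    also have "\<dots> \<le> (\<Sum>x<4. cmod (rp sA sB (bell_diag p) x x))" by (rule norm_sum)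
    also have "\<dots> = f 0 0 + f 1 1 + f 2 2 + f 3 3" by (simp add: sum4 f_def)
    finally show ?thesis .
  qed
  have b1: "m/2 \<le> f 0 1 + f 0 3 + f 2 1 + f 2 3"
    using block_bound[OF A B, of 0 1 p] unfolding m_def c1_def c2_def c3_def f_def by (simp add: sum2 add.assoc)
  have b2: "m/2 \<le> f 1 0 + f 1 2 + f 3 0 + f 3 2"
    using block_bound[OF A B, of 1 0 p] unfolding m_def c1_def c2_def c3_def f_def by (simp add: sum2 add.assoc)
  have nn: "0 \<le> f 0 2" "0 \<le> f 2 0" "0 \<le> f 1 3" "0 \<le> f 3 1" by (simp_all add: f_def)
  have "(\<Sum>x<4. \<Sum>y<4. cmod (rp sA sB (bell_diag p) y x)) = (\<Sum>x<4. \<Sum>y<4. f y x)" by (simp add: f_def)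
  also have "\<dots> = f 0 0 + f 1 1 + f 2 2 + f 3 3 + (f 0 1 + f 0 3 + f 2 1 + f 2 3) + (f 1 0 + f 1 2 + f 3 0 + f 3 2)
      + f 0 2 + f 2 0 + f 1 3 + f 3 1" by (simp add: sum4)
  finally show ?thesis using d b1 b2 nn unfolding m_def by linarith
qed

lemma absmax: "\<bar>x\<bar> + \<bar>y\<bar> = max \<bar>x + y\<bar> \<bar>x - y\<bar>" for x y :: real
  by (simp add: abs_if max_def)

lemma neg_special:
  fixes p :: "nat \<Rightarrow> real"
  assumes nn: "\<forall>i<4. p i \<ge> 0" and ps: "(\<Sum>i<4. p i) = 1"
  shows "negativity_AB_ApBp (measured_state cb cb (bell_diag p)) = (\<bar>p 0 - p 3\<bar> + \<bar>p 1 - p 2\<bar>) / 2"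
    "negativity_AB_ApBp (measured_state hb hb (bell_diag p)) = (\<bar>p 0 - p 1\<bar> + \<bar>p 3 - p 2\<bar>) / 2"
    "negativity_AB_ApBp (measured_state yb yb (bell_diag p)) = (\<bar>p 3 - p 1\<bar> + \<bar>p 0 - p 2\<bar>) / 2"
proof -
  have p4: "p 0 \<ge> 0" "p 1 \<ge> 0" "p 2 \<ge> 0" "p 3 \<ge> 0" using nn by auto
  have s: "p 0 + p 1 + p 2 + p 3 = 1" using ps by (simp add: sum4)
  have q1: "\<And>i. i < 4 \<Longrightarrow> (\<lambda>i. [p 0, p 3, p 2, p 1] ! i) i \<ge> 0"
    using p4 unfolding less4 by auto
  have q2: "\<And>i. i < 4 \<Longrightarrow> (\<lambda>i. [p 3, p 0, p 2, p 1] ! i) i \<ge> 0"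
    using p4 unfolding less4 by auto
  have "(\<Sum>x<4. \<Sum>y<4. cmod (rp cb cb (bell_diag p) y x)) = (\<Sum>x<4. \<Sum>y<4. cmod (complex_of_real (rr p y x)))"
    by (intro sum.cong refl) (simp add: rp_cb)
  also have "\<dots> = p 0 + p 1 + p 2 + p 3 + \<bar>p 0 - p 3\<bar> + \<bar>p 1 - p 2\<bar>"
    by (rule sum_rr) (use nn in auto)
  finally show "negativity_AB_ApBp (measured_state cb cb (bell_diag p)) = (\<bar>p 0 - p 3\<bar> + \<bar>p 1 - p 2\<bar>) / 2"
    unfolding negativity_X[OF onb_cb onb_cb bell_diag_carrier] using s by simp
  have "(\<Sum>x<4. \<Sum>y<4. cmod (rp hb hb (bell_diag p) y x)) = (\<Sum>x<4. \<Sum>y<4. cmod (complex_of_real (rr (\<lambda>i. [p 0, p 3, p 2, p 1] ! i) y x)))"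
    by (intro sum.cong refl) (simp add: rp_hb)
  also have "\<dots> = p 0 + p 3 + p 2 + p 1 + \<bar>p 0 - p 1\<bar> + \<bar>p 3 - p 2\<bar>"
    using sum_rr[OF q1] by simp
  finally show "negativity_AB_ApBp (measured_state hb hb (bell_diag p)) = (\<bar>p 0 - p 1\<bar> + \<bar>p 3 - p 2\<bar>) / 2"
    unfolding negativity_X[OF onb_hb onb_hb bell_diag_carrier] using s by simp
  have "(\<Sum>x<4. \<Sum>y<4. cmod (rp yb yb (bell_diag p) y x)) = (\<Sum>x<4. \<Sum>y<4. cmod (complex_of_real (rr (\<lambda>i. [p 3, p 0, p 2, p 1] ! i) y x)))"
    by (intro sum.cong refl) (simp add: rp_yb)
  also have "\<dots> = p 3 + p 0 + p 2 + p 1 + \<bar>p 3 - p 1\<bar> + \<bar>p 0 - p 2\<bar>"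
    using sum_rr[OF q2] by simp
  finally show "negativity_AB_ApBp (measured_state yb yb (bell_diag p)) = (\<bar>p 3 - p 1\<bar> + \<bar>p 0 - p 2\<bar>) / 2"
    unfolding negativity_X[OF onb_yb onb_yb bell_diag_carrier] using s by simp
qed

theorem corollary3:
  fixes p :: "nat \<Rightarrow> real"
  assumes "\<forall>i<4. p i \<ge> 0" and "(\<Sum>i<4. p i) = 1"
  defines "lam2 \<equiv> sort [cmod (corr (bell_diag p) 1 1), cmod (corr (bell_diag p) 2 2),
                        cmod (corr (bell_diag p) 3 3)] ! 1"
  shows "QN_AB (bell_diag p) = lam2 / 2 \<and>
         (\<exists>sA sB. onb 2 sA \<and> onb 2 sB \<and>
            negativity_AB_ApBp (measured_state sA sB (bell_diag p)) = lam2 / 2)"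
proof -
  define c1 where "c1 = p 0 + p 1 - p 2 - p 3"
  define c2 where "c2 = - p 0 + p 1 - p 2 + p 3"
  define c3 where "c3 = p 0 - p 1 - p 2 + p 3"
  have lam: "lam2 = sort [\<bar>c1\<bar>, \<bar>c2\<bar>, \<bar>c3\<bar>] ! 1"
    unfolding lam2_def corr_vals norm_of_real c1_def c2_def c3_def ..
  have low: "lam2 / 2 \<le> negativity_AB_ApBp (measured_state sA sB (bell_diag p))" if "onb 2 sA" "onb 2 sB" for sA sB
    using lower_total[OF that assms(2)] unfolding negativity_X[OF that bell_diag_carrier] lam c1_def c2_def c3_def
    by simp
  have ex: "\<exists>sA sB. onb 2 sA \<and> onb 2 sB \<and> negativity_AB_ApBp (measured_state sA sB (bell_diag p)) = lam2 / 2"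
  proof -
    note N = neg_special[OF assms(1,2)]
    have e_cb: "\<bar>p 0 - p 3\<bar> + \<bar>p 1 - p 2\<bar> = max \<bar>c1\<bar> \<bar>c2\<bar>"
      unfolding absmax c1_def c2_def by (simp add: max_def algebra_simps abs_minus_commute)
    have e_hb: "\<bar>p 0 - p 1\<bar> + \<bar>p 3 - p 2\<bar> = max \<bar>c2\<bar> \<bar>c3\<bar>"
      unfolding absmax c2_def c3_def by (simp add: max_def algebra_simps abs_minus_commute)
    have e_yb: "\<bar>p 3 - p 1\<bar> + \<bar>p 0 - p 2\<bar> = max \<bar>c1\<bar> \<bar>c3\<bar>"
      unfolding absmax c1_def c3_def by (simp add: max_def algebra_simps abs_minus_commute)
    have M: "(\<bar>c1\<bar> \<le> lam2 \<and> lam2 \<le> \<bar>c2\<bar> \<and> lam2 = \<bar>c3\<bar>) \<or> (\<bar>c2\<bar> \<le> lam2 \<and> lam2 \<le> \<bar>c1\<bar> \<and> lam2 = \<bar>c3\<bar>) \<or> (\<bar>c1\<bar> \<le> lam2 \<and> lam2 \<le> \<bar>c3\<bar> \<and> lam2 = \<bar>c2\<bar>)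
      \<or> (\<bar>c3\<bar> \<le> lam2 \<and> lam2 \<le> \<bar>c1\<bar> \<and> lam2 = \<bar>c2\<bar>) \<or> (\<bar>c2\<bar> \<le> lam2 \<and> lam2 \<le> \<bar>c3\<bar> \<and> lam2 = \<bar>c1\<bar>) \<or> (\<bar>c3\<bar> \<le> lam2 \<and> lam2 \<le> \<bar>c2\<bar> \<and> lam2 = \<bar>c1\<bar>)"
      unfolding lam by (rule median3)
    have "max \<bar>c1\<bar> \<bar>c2\<bar> = lam2 \<or> max \<bar>c2\<bar> \<bar>c3\<bar> = lam2 \<or> max \<bar>c1\<bar> \<bar>c3\<bar> = lam2"
      using M by (auto simp: max_def)
    thus ?thesis
    proof (elim disjE)
      assume "max \<bar>c1\<bar> \<bar>c2\<bar> = lam2" thus ?thesis using N(1) e_cb onb_cb by metis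
    next
      assume "max \<bar>c2\<bar> \<bar>c3\<bar> = lam2" thus ?thesis using N(2) e_hb onb_hb by metis
    next
      assume "max \<bar>c1\<bar> \<bar>c3\<bar> = lam2" thus ?thesis using N(3) e_yb onb_yb by metis
    qed
  qed
  have "QN_AB (bell_diag p) = lam2 / 2"
    unfolding QN_AB_def
  proof (rule cInf_eq_minimum)
    show "lam2 / 2 \<in> {negativity_AB_ApBp (measured_state sA sB (bell_diag p)) |sA sB. onb 2 sA \<and> onb 2 sB}"
      using ex by auto
  next
    fix x assume "x \<in> {negativity_AB_ApBp (measured_state sA sB (bell_diag p)) |sA sB. onb 2 sA \<and> onb 2 sB}"
    thus "lam2 / 2 \<le> x" using low by auto
  qed
  with ex show ?thesis by blast
qed

end
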